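(* Let $\{b_n\}_{n\ge1}$ be a sequence of non-zero complex numbers with finite exponent of convergence and genus $p\ge1$, and let $a>0$ be real with $a+b_n\neq0$ for all $n$. Then for every $z\in\mathbb C$, $$\sum_{n=1}^\infty\sum_{j=1}^p\frac{(-1)^j}{j}a^j\Big(\frac{z^j}{(a+b_n)^j}-\frac{(1+z)^j}{b_n^j}+\frac1{b_n^j}\Big)=\sum_{k=1}^pE^p_k(a)z^k,$$ where $E^p_k(a)=\sum_{n=1}^\infty\Big(\frac{(-1)^k}{k}\frac{a^k}{(a+b_n)^k}-\sum_{j=k}^p\frac{(-1)^j}{j}\binom jk\frac{a^j}{b_n^j}\Big)$, all series being convergent.
   Context: For a sequence $\{b_n\}$ of non-zero complex numbers with only accumulation point $\infty$ (ordered by modulus), the exponent of convergence is $\limsup_n\log n/\log|b_n|$ and the genus $p$ is its integer part, i.e. the least integer $p\ge0$ with $\sum_n|b_n|^{-p-1}<\infty$. *)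

theory Defs
  imports "HOL-Analysis.Analysis"
begin

text \<open>Convention: the paper's sequence b_1, b_2, ... is represented by
  b :: nat => complex with b n standing for b_(n+1).\<close>

definition admissible_seq :: "(nat \<Rightarrow> complex) \<Rightarrow> bool" where
  "admissible_seq b \<longleftrightarrow> (\<forall>n. b n \<noteq> 0) \<and> mono (\<lambda>n. norm (b n))
     \<and> filterlim (\<lambda>n. norm (b n)) at_top sequentially"

definition exponent_of_convergence :: "(nat \<Rightarrow> complex) \<Rightarrow> ereal" where
  "exponent_of_convergence b =
     limsup (\<lambda>n. ereal (ln (real (Suc n)) / ln (norm (b n))))"

definition genus_of :: "(nat \<Rightarrow> complex) \<Rightarrow> nat \<Rightarrow> bool" where
  "genus_of b p \<longleftrightarrow> (LEAST q::nat. summable (\<lambda>n. norm (b n) powr (- real (q + 1)))) = p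
       \<and> (\<exists>q::nat. summable (\<lambda>n. norm (b n) powr (- real (q + 1))))"

definition E_term :: "(nat \<Rightarrow> complex) \<Rightarrow> nat \<Rightarrow> nat \<Rightarrow> real \<Rightarrow> nat \<Rightarrow> complex" where
  "E_term b p k a n =
     (-1) ^ k / of_nat k * (of_real a) ^ k / (of_real a + b n) ^ k
     - (\<Sum>j=k..p. (-1) ^ j / of_nat j * of_nat (j choose k) * (of_real a) ^ j / (b n) ^ j)"

definition E_coef :: "(nat \<Rightarrow> complex) \<Rightarrow> nat \<Rightarrow> nat \<Rightarrow> real \<Rightarrow> complex" where
  "E_coef b p k a = (\<Sum>n. E_term b p k a n)"

end

theory Submission
  imports Defs
begin

lemma binom_id: assumes "k \<ge> 1" shows "real (k + m) * real ((k + m - 1) choose m) = real k * real ((k + m) choose k)"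
proof -
  obtain k' where k: "k = Suc k'" using assms not0_implies_Suc[of k] by auto
  have "Suc (k'+m) * ((k'+m) choose k') = (Suc (k'+m) choose Suc k') * Suc k'"
    by (rule Suc_times_binomial_eq)
  moreover have "(k'+m) choose k' = (k'+m) choose m"
    by (metis add_diff_cancel_left' binomial_symmetric le_add1)
  ultimately have "(k + m) * ((k + m - 1) choose m) = k * ((k + m) choose k)"
    using k by (simp add: mult.commute)
  then show ?thesis by (metis of_nat_mult)
qed

lemma ser:
  fixes w :: complex
  assumes "norm w < 1" "k \<ge> 1"
  shows "(\<lambda>m. (-1) ^ (k+m) / of_nat (k+m) * of_nat ((k+m) choose k) * w ^ (k+m))
           sums ((-1) ^ k / of_nat k * (w / (1 + w)) ^ k)"
proof -
  have w1: "1 + w \<noteq> 0"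
  proof
    assume "1 + w = 0" then have "w = -1" by (simp add: add_eq_0_iff)
    with assms show False by simp
  qed
  have "(\<lambda>m. ((- of_nat k) gchoose m) * w ^ m) sums ((1 + w) powr (- of_nat k))"
    using gen_binomial_complex[OF assms(1)] by blast
  also have "(1 + w) powr (- of_nat k) = inverse ((1 + w) ^ k)"
    using powr_of_int[OF w1, of "- int k"] assms(2) by simp
  finally have s: "(\<lambda>m. ((- of_nat k) gchoose m) * w ^ m) sums inverse ((1 + w) ^ k)" .
  have s2: "(\<lambda>m. (-1) ^ k / of_nat k * w ^ k * (((- of_nat k) gchoose m) * w ^ m)) sums
      ((-1) ^ k / of_nat k * w ^ k * inverse ((1 + w) ^ k))"
    by (rule sums_mult[OF s])
  have eq: "(-1) ^ k / of_nat k * w ^ k * (((- of_nat k) gchoose m) * w ^ m)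
      = (-1) ^ (k+m) / of_nat (k+m) * of_nat ((k+m) choose k) * w ^ (k+m)" for m
  proof -
    have g: "((- of_nat k) gchoose m :: complex) = (-1) ^ m * of_nat ((k + m - 1) choose m)"
      using assms(2) by (simp add: gbinomial_minus binomial_gbinomial of_nat_diff)
    have b: "of_nat (k + m) * of_nat ((k + m - 1) choose m) = (of_nat k * of_nat ((k + m) choose k) :: complex)"
      using binom_id[OF assms(2), of m] by (metis of_nat_mult of_real_of_nat_eq of_nat_eq_iff)
    have k0: "(of_nat k :: complex) \<noteq> 0" "(of_nat (k+m) :: complex) \<noteq> 0" using assms(2) by (simp, metis of_nat_add of_nat_eq_0_iff add_is_0 not_one_le_zero)
    show ?thesis unfolding g using b k0
      by (simp add: field_simps power_add)
  qed
  have l: "(-1) ^ k / of_nat k * w ^ k * inverse ((1 + w) ^ k) = (-1) ^ k / of_nat k * (w / (1 + w)) ^ k"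
    by (simp add: power_divide field_simps)
  from s2 show ?thesis unfolding eq l .
qed
lemma tailbound:
  fixes w :: complex
  assumes "norm w \<le> 1/4" "k \<ge> 1" "k \<le> p"
  shows "norm ((-1) ^ k / of_nat k * (w / (1 + w)) ^ k
     - (\<Sum>j=k..p. (-1) ^ j / of_nat j * of_nat (j choose k) * w ^ j)) \<le> 2 * (2 * norm w) ^ (p+1)"
proof -
  define f where "f m = (-1) ^ (k+m) / of_nat (k+m) * of_nat ((k+m) choose k) * w ^ (k+m)" for m
  define S where "S = (-1) ^ k / of_nat k * (w / (1 + w)) ^ k"
  define N where "N = p + 1 - k"
  have fs: "f sums S" unfolding f_def S_def using ser[of w k] assms by simp
  have ps: "(\<Sum>i<N. f i) = (\<Sum>j=k..p. (-1) ^ j / of_nat j * of_nat (j choose k) * w ^ j)"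
    unfolding f_def N_def
    by (rule sum.reindex_bij_witness[of _ "\<lambda>j. j - k" "\<lambda>i. k + i"]) (use assms in auto)
  have sh: "(\<lambda>i. f (i + N)) sums (S - (\<Sum>i<N. f i))"
    using sums_iff_shift[of f N "S - (\<Sum>i<N. f i)"] fs by simp
  define r where "r = 2 * norm w"
  have r0: "0 \<le> r" "r \<le> 1/2" using assms(1) by (auto simp: r_def)
  have bnd: "norm (f (i + N)) \<le> r ^ (p+1) * r ^ i" for i
  proof -
    have e: "k + (i + N) = p + 1 + i" using assms unfolding N_def by simp
    have "norm (f (i + N)) = real ((p+1+i) choose k) / real (p+1+i) * norm w ^ (p+1+i)"
      unfolding f_def e norm_mult norm_divide norm_power norm_of_nat by simp
    also have "\<dots> \<le> real ((p+1+i) choose k) * norm w ^ (p+1+i)"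
      by (intro mult_right_mono) (auto simp: field_simps)
    also have "\<dots> \<le> 2 ^ (p+1+i) * norm w ^ (p+1+i)"
    proof (intro mult_right_mono)
      have "(p+1+i) choose k \<le> 2 ^ (p+1+i)" by (rule binomial_le_pow2)
      then have "real ((p+1+i) choose k) \<le> real (2 ^ (p+1+i))" by (rule of_nat_mono)
      then show "real ((p+1+i) choose k) \<le> 2 ^ (p+1+i)" by simp
    qed simp
    also have "\<dots> = r ^ (p+1) * r ^ i" by (simp add: r_def power_mult_distrib power_add)
    finally show ?thesis .
  qed
  have gs: "(\<lambda>i. r ^ (p+1) * r ^ i) sums (r ^ (p+1) * (1 / (1 - r)))"
    by (intro sums_mult geometric_sums) (use r0 in auto)
  have "norm (S - (\<Sum>i<N. f i)) = norm (suminf (\<lambda>i. f (i + N)))" using sh by (simp add: sums_iff)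
  also have "\<dots> \<le> suminf (\<lambda>i. r ^ (p+1) * r ^ i)"
    by (rule norm_suminf_le[OF bnd]) (use gs in \<open>simp add: sums_iff\<close>)
  also have "\<dots> = r ^ (p+1) * (1 / (1 - r))" using gs by (simp add: sums_iff)
  also have "\<dots> \<le> r ^ (p+1) * 2"
    by (intro mult_left_mono) (use r0 in \<open>auto simp: field_simps\<close>)
  finally show ?thesis unfolding S_def ps r_def by simp
qed
lemma tri_swap:
  fixes g :: "nat \<Rightarrow> nat \<Rightarrow> 'a::comm_monoid_add"
  shows "(\<Sum>j=1..p. \<Sum>k=1..j. g j k) = (\<Sum>k=1..p. \<Sum>j=k..p. g j k)"
proof -
  have "(\<Sum>j=1..p. \<Sum>k=1..j. g j k) = (\<Sum>j=1..p. \<Sum>k=1..p. if k \<le> j then g j k else 0)"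
  proof (rule sum.cong[OF refl])
    fix j assume "j \<in> {1..p}"
    then have "{1..p} \<inter> {k. k \<le> j} = {1..j}" by auto
    then show "(\<Sum>k=1..j. g j k) = (\<Sum>k=1..p. if k \<le> j then g j k else 0)"
      using sum.inter_restrict[of "{1..p}" "g j" "{k. k \<le> j}"] by simp
  qed
  also have "\<dots> = (\<Sum>k=1..p. \<Sum>j=1..p. if k \<le> j then g j k else 0)" by (rule sum.swap)
  also have "\<dots> = (\<Sum>k=1..p. \<Sum>j=k..p. g j k)"
  proof (rule sum.cong[OF refl])
    fix k assume "k \<in> {1..p}"
    then have "{1..p} \<inter> {j. k \<le> j} = {k..p}" by auto
    then show "(\<Sum>j=1..p. if k \<le> j then g j k else 0) = (\<Sum>j=k..p. g j k)"
      using sum.inter_restrict[of "{1..p}" "\<lambda>j. g j k" "{j. k \<le> j}"] by simp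
  qed
  finally show ?thesis .
qed

lemma binom_exp: "(1 + z) ^ j = 1 + (\<Sum>k=1..j. of_nat (j choose k) * (z::complex) ^ k)"
proof -
  have "(1 + z) ^ j = (\<Sum>k\<le>j. of_nat (j choose k) * z ^ k)"
    using binomial_ring[of z 1 j] by (simp add: add.commute)
  also have "{..j} = insert 0 {1..j}" by auto
  finally show ?thesis by simp
qed

lemma summand_eq:
  fixes A B z :: complex
  shows "(\<Sum>j=1..p. (-1) ^ j / of_nat j * A ^ j *
          (z ^ j / (A + B) ^ j - (1 + z) ^ j / B ^ j + 1 / B ^ j))
    = (\<Sum>k=1..p. ((-1) ^ k / of_nat k * A ^ k / (A + B) ^ k
     - (\<Sum>j=k..p. (-1) ^ j / of_nat j * of_nat (j choose k) * A ^ j / B ^ j)) * z ^ k)"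
proof -
  have "(\<Sum>j=1..p. (-1) ^ j / of_nat j * A ^ j *
          (z ^ j / (A + B) ^ j - (1 + z) ^ j / B ^ j + 1 / B ^ j))
      = (\<Sum>j=1..p. (-1) ^ j / of_nat j * A ^ j / (A + B) ^ j * z ^ j)
        - (\<Sum>j=1..p. \<Sum>k=1..j. (-1) ^ j / of_nat j * of_nat (j choose k) * A ^ j / B ^ j * z ^ k)"
    unfolding binom_exp sum_subtractf[symmetric]
    by (rule sum.cong[OF refl]) (simp add: sum_distrib_left sum_divide_distrib diff_divide_distrib add_divide_distrib algebra_simps)
  also have "\<dots> = (\<Sum>k=1..p. (-1) ^ k / of_nat k * A ^ k / (A + B) ^ k * z ^ k)
        - (\<Sum>k=1..p. (\<Sum>j=k..p. (-1) ^ j / of_nat j * of_nat (j choose k) * A ^ j / B ^ j) * z ^ k)"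
    unfolding tri_swap sum_distrib_right ..
  also have "\<dots> = (\<Sum>k=1..p. ((-1) ^ k / of_nat k * A ^ k / (A + B) ^ k
     - (\<Sum>j=k..p. (-1) ^ j / of_nat j * of_nat (j choose k) * A ^ j / B ^ j)) * z ^ k)"
    unfolding sum_subtractf[symmetric] by (rule sum.cong[OF refl]) (simp add: algebra_simps)
  finally show ?thesis .
qed

theorem mainTheorem7:
  fixes b :: "nat \<Rightarrow> complex" and p :: nat and a :: real and z :: complex
  assumes "admissible_seq b"
    and "exponent_of_convergence b < \<infinity>"
    and "genus_of b p" and "p \<ge> 1"
    and "a > 0" and "\<forall>n. of_real a + b n \<noteq> 0"
  shows "(\<forall>k\<in>{1..p}. summable (\<lambda>n. E_term b p k a n))
    \<and> (\<lambda>n. \<Sum>j=1..p. (-1) ^ j / of_nat j * (of_real a) ^ j *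
          (z ^ j / (of_real a + b n) ^ j - (1 + z) ^ j / (b n) ^ j + 1 / (b n) ^ j))
       sums (\<Sum>k=1..p. E_coef b p k a * z ^ k)"
proof -
  have b0: "\<And>n. b n \<noteq> 0" and lim: "filterlim (\<lambda>n. norm (b n)) at_top sequentially"
    using assms(1) unfolding admissible_seq_def by auto
  have ab: "\<And>n. of_real a + b n \<noteq> 0" using assms(6) by auto
  have gs: "summable (\<lambda>n. norm (b n) powr (- real (p + 1)))"
  proof -
    from assms(3) obtain q where q: "summable (\<lambda>n. norm (b n) powr (- real (q + 1)))"
      and l: "(LEAST q::nat. summable (\<lambda>n. norm (b n) powr (- real (q + 1)))) = p"
      unfolding genus_of_def by auto
    show ?thesis using LeastI[of "\<lambda>q. summable (\<lambda>n. norm (b n) powr (- real (q + 1)))", OF q] l by simp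
  qed
  have ev: "eventually (\<lambda>n. norm (b n) \<ge> 4 * a) sequentially"
    using lim by (simp add: filterlim_at_top)
  have summ: "summable (\<lambda>n. E_term b p k a n)" if k: "k \<in> {1..p}" for k
  proof (rule summable_comparison_test_ev)
    show "summable (\<lambda>n. 2 * (2 * a) ^ (p+1) * norm (b n) powr (- real (p + 1)))"
      by (intro summable_mult gs)
    show "eventually (\<lambda>n. norm (E_term b p k a n) \<le> 2 * (2 * a) ^ (p+1) * norm (b n) powr (- real (p + 1))) sequentially"
      using ev
    proof eventually_elim
      case (elim n)
      define w where "w = of_real a / b n"
      have nb: "norm (b n) > 0" using b0[of n] by simp
      have nw: "norm w = a / norm (b n)" using assms(5) by (simp add: w_def norm_divide)
      have nw4: "norm w \<le> 1/4" unfolding nw using elim nb assms(5) by (simp add: field_simps)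
      have e1: "w / (1 + w) = of_real a / (of_real a + b n)"
        using b0[of n] ab[of n] by (simp add: w_def field_simps)
      have "E_term b p k a n = (-1) ^ k / of_nat k * (w / (1 + w)) ^ k
         - (\<Sum>j=k..p. (-1) ^ j / of_nat j * of_nat (j choose k) * w ^ j)"
      proof -
        have "E_term b p k a n = (-1) ^ k / of_nat k * ((of_real a) ^ k / (of_real a + b n) ^ k)
           - (\<Sum>j=k..p. (-1) ^ j / of_nat j * of_nat (j choose k) * ((of_real a) ^ j / (b n) ^ j))"
          by (simp add: E_term_def)
        also have "\<dots> = (-1) ^ k / of_nat k * (w / (1 + w)) ^ k
           - (\<Sum>j=k..p. (-1) ^ j / of_nat j * of_nat (j choose k) * w ^ j)"
          by (simp only: power_divide[symmetric] e1[symmetric] w_def[symmetric])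
        finally show ?thesis .
      qed
      then have "norm (E_term b p k a n) \<le> 2 * (2 * norm w) ^ (p+1)"
        using tailbound[OF nw4, of k p] k by simp
      also have "\<dots> = 2 * (2 * a) ^ (p+1) * norm (b n) powr (- real (p + 1))"
      proof -
        have "norm (b n) powr (- real (p + 1)) = 1 / norm (b n) ^ (p+1)"
          using nb powr_minus_divide[of "norm (b n)" "real (p+1)"] powr_realpow[of "norm (b n)" "p+1"]
          by (simp only:)
        then show ?thesis unfolding nw by (simp add: power_divide power_mult_distrib)
      qed
      finally show ?case .
    qed
  qed
  have "(\<lambda>n. \<Sum>k=1..p. E_term b p k a n * z ^ k) sums (\<Sum>k=1..p. E_coef b p k a * z ^ k)"
    by (intro sums_sum sums_mult2) (use summ in \<open>auto simp: E_coef_def summable_sums\<close>)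
  moreover have "(\<lambda>n. \<Sum>j=1..p. (-1) ^ j / of_nat j * (of_real a) ^ j *
          (z ^ j / (of_real a + b n) ^ j - (1 + z) ^ j / (b n) ^ j + 1 / (b n) ^ j))
      = (\<lambda>n. \<Sum>k=1..p. E_term b p k a n * z ^ k)"
    unfolding summand_eq E_term_def ..
  ultimately show ?thesis using summ by simp
qed

end
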